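(* At any time during the execution of DASH (described in the context) on an initially connected graph, every surviving node $v$ satisfies $\mathrm{rem}(v)\ge 2^{\delta(v)/2}$.
   Context: Model: a network is an undirected graph, initially a connected graph $G_0$ on $n$ nodes. In each round an adversary deletes one surviving node $v$ with its incident edges, and then DASH adds edges. $G$ is the current network; $E'$ is the set of healing edges added so far whose endpoints both survive; $G'=(V(G),E')$. $N(u,G)$, $N(u,G')$ are neighbor sets in $G$, $G'$; $\delta(u)=\deg_G(u)-\deg_{G_0}(u)$ is the degree increase of $u$ relative to its initial degree. DASH: initially every node receives an ID drawn independently and uniformly from $[0,1]$ (its initial ID). When $v$ is deleted (quantities evaluated just before the deletion): partition the nodes of $N(v,G)$ whose current ID differs from that of $v$ into classes of equal current ID; $UN(v,G)$ consists of one node per class, the one with lowest initial ID. Let $S=UN(v,G)\cup N(v,G')$. Order $S$ by increasing $\delta$ and place it in this order into a complete binary tree with $|S|$ positions, filled level by level from the top and left to right; add to the network and to $E'$ the edge between each node of $S$ and the node at its parent position. Then all nodes of the component of $G'$ containing $S$ set their ID to the minimum current ID in $S$. Weights: every node $u$ has weight $w(u)$, initially $1$; when a node $v$ is deleted, $w(v)$ is added to the weight of an arbitrarily chosen node of $N(v,G')$. For a subgraph $H$, $W(H)$ is the sum of the weights of its vertices. For distinct surviving nodes $x,y$, $T(x,y)$ is the connected component of $G'-y$ containing $x$. Define $\mathrm{rem}(v)=\sum_{u\in N(v,G')}W(T(u,v))-\max_{u\in N(v,G')}W(T(u,v))+w(v)$ (the maximum over the empty set being $0$). *)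

theory Defs
  imports Complex_Main
begin

text \<open>Undirected simple graphs are represented by a vertex set and a set of edges,
each edge being a two-element set of vertices.\<close>

record 'a dash_state =
  alive :: "'a set"
  gE    :: "'a set set"
  hE    :: "'a set set"        \<comment> \<open>E': healing edges with both endpoints surviving\<close>
  cid   :: "'a \<Rightarrow> real"
  wt    :: "'a \<Rightarrow> nat"

definition nbrs :: "'a set set \<Rightarrow> 'a \<Rightarrow> 'a set" where
  "nbrs E u = {x. {u, x} \<in> E \<and> x \<noteq> u}"

definition reach :: "'a set set \<Rightarrow> 'a \<Rightarrow> 'a \<Rightarrow> bool" where
  "reach E x y \<longleftrightarrow> (x, y) \<in> {(a, b). {a, b} \<in> E}\<^sup>*"

definition simple_graph :: "'a set \<Rightarrow> 'a set set \<Rightarrow> bool" where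
  "simple_graph V E \<longleftrightarrow> (\<forall>e\<in>E. \<exists>a b. e = {a, b} \<and> a \<noteq> b \<and> a \<in> V \<and> b \<in> V)"

definition connected_graph :: "'a set \<Rightarrow> 'a set set \<Rightarrow> bool" where
  "connected_graph V E \<longleftrightarrow> (\<forall>x\<in>V. \<forall>y\<in>V. reach E x y)"

definition delta :: "'a set set \<Rightarrow> 'a set set \<Rightarrow> 'a \<Rightarrow> int" where
  "delta E0 E u = int (card (nbrs E u)) - int (card (nbrs E0 u))"

definition UNset :: "('a \<Rightarrow> real) \<Rightarrow> ('a \<Rightarrow> real) \<Rightarrow> 'a set set \<Rightarrow> 'a \<Rightarrow> 'a set" where
  "UNset iid idf E v = {x \<in> nbrs E v. idf x \<noteq> idf v \<and>
      (\<forall>y \<in> nbrs E v. idf y = idf x \<longrightarrow> iid x \<le> iid y)}"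

text \<open>Edges of the complete binary tree in which the list xs is placed level by level
 (heap order): position i (0-based, i > 0) has parent position (i - 1) div 2.\<close>
definition tree_edges :: "'a list \<Rightarrow> 'a set set" where
  "tree_edges xs = {{xs ! i, xs ! ((i - 1) div 2)} | i. 0 < i \<and> i < length xs}"

definition Tcomp :: "'a set set \<Rightarrow> 'a \<Rightarrow> 'a \<Rightarrow> 'a set" where
  "Tcomp E' x y = {z. (x, z) \<in> {(a, b). {a, b} \<in> E' \<and> a \<noteq> y \<and> b \<noteq> y}\<^sup>*}"

definition Wt :: "('a \<Rightarrow> nat) \<Rightarrow> 'a set \<Rightarrow> real" where
  "Wt w A = real (\<Sum>u\<in>A. w u)"

definition rem :: "'a dash_state \<Rightarrow> 'a \<Rightarrow> real" where
  "rem s v = (\<Sum>u\<in>nbrs (hE s) v. Wt (wt s) (Tcomp (hE s) u v))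
            - Max (insert 0 ((\<lambda>u. Wt (wt s) (Tcomp (hE s) u v)) ` nbrs (hE s) v))
            + real (wt s v)"

text \<open>Nondeterminism covers the
 adversary's choice of v, the tie-breaking in the ordering of S by delta, and the
 arbitrary choice of the node c receiving the weight of v.\<close>
inductive dash_reachable ::
  "'a set \<Rightarrow> 'a set set \<Rightarrow> ('a \<Rightarrow> real) \<Rightarrow> 'a dash_state \<Rightarrow> bool"
  for V0 E0 iid where
  init: "dash_reachable V0 E0 iid
           \<lparr>alive = V0, gE = E0, hE = {}, cid = iid, wt = (\<lambda>_. 1)\<rparr>"
| step: "\<lbrakk> dash_reachable V0 E0 iid s;
          v \<in> alive s;
          S = UNset iid (cid s) (gE s) v \<union> nbrs (hE s) v;
          set xs = S; distinct xs;
          sorted (map (delta E0 (gE s)) xs);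
          nbrs (hE s) v \<noteq> {} \<longrightarrow> c \<in> nbrs (hE s) v;
          H = tree_edges xs;
          E'new = {e \<in> hE s. v \<notin> e} \<union> H \<rbrakk>
   \<Longrightarrow> dash_reachable V0 E0 iid
        \<lparr>alive = alive s - {v},
         gE = {e \<in> gE s. v \<notin> e} \<union> H,
         hE = E'new,
         cid = (\<lambda>y. if (\<exists>x\<in>S. reach E'new x y) then Min (cid s ` S) else cid s y),
         wt = (if nbrs (hE s) v = {} then wt s else (wt s)(c := wt s c + wt s v))\<rparr>"

end

theory Submission
  imports Defs
begin


definition Rel :: "'a set set \<Rightarrow> ('a \<times> 'a) set" where
  "Rel E = {(a,b). {a,b} \<in> E}"
definition gcomp :: "'a set set \<Rightarrow> 'a \<Rightarrow> 'a set" where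
  "gcomp E a = {z. (a,z) \<in> (Rel E)\<^sup>*}"
definition delS :: "'a set set \<Rightarrow> 'a set \<Rightarrow> 'a set set" where
  "delS E Z = {e\<in>E. e \<inter> Z = {}}"

lemma Tcomp_eq: "Tcomp E x y = gcomp (delS E {y}) x"
  unfolding Tcomp_def gcomp_def delS_def Rel_def
  by (rule arg_cong[where f="\<lambda>R. {z. (x,z) \<in> R\<^sup>*}"]) auto

lemma reach_eq: "reach E x y \<longleftrightarrow> y \<in> gcomp E x"
  unfolding reach_def gcomp_def Rel_def by simp

lemma Rel_sym: "(a,b) \<in> Rel E \<Longrightarrow> (b,a) \<in> Rel E"
  unfolding Rel_def by (simp add: insert_commute)

lemma rtr_sym: "(a,b) \<in> (Rel E)\<^sup>* \<Longrightarrow> (b,a) \<in> (Rel E)\<^sup>*"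
proof (induction rule: rtrancl_induct)
  case base then show ?case by simp
next
  case (step y z)
  then show ?case using Rel_sym by (meson converse_rtrancl_into_rtrancl)
qed

lemma gcomp_self[simp]: "a \<in> gcomp E a" unfolding gcomp_def by simp

lemma gcomp_sym: "b \<in> gcomp E a \<Longrightarrow> a \<in> gcomp E b"
  unfolding gcomp_def using rtr_sym by fast

lemma gcomp_trans: "b \<in> gcomp E a \<Longrightarrow> c \<in> gcomp E b \<Longrightarrow> c \<in> gcomp E a"
  unfolding gcomp_def by (meson mem_Collect_eq rtrancl_trans)

lemma gcomp_sub: "b \<in> gcomp E a \<Longrightarrow> gcomp E b \<subseteq> gcomp E a"
  using gcomp_trans by fast

lemma gcomp_eqI: "b \<in> gcomp E a \<Longrightarrow> gcomp E b = gcomp E a"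
  using gcomp_sub gcomp_sym by (metis subset_antisym)

lemma gcomp_edge: "{a,b} \<in> E \<Longrightarrow> b \<in> gcomp E a"
  unfolding gcomp_def Rel_def by auto

lemma gcomp_mono: "E \<subseteq> E' \<Longrightarrow> gcomp E a \<subseteq> gcomp E' a"
proof -
  assume "E \<subseteq> E'"
  then have "Rel E \<subseteq> Rel E'" unfolding Rel_def by auto
  then show ?thesis unfolding gcomp_def using rtrancl_mono by blast
qed

lemma gcomp_closed:
  assumes "a \<in> X" "\<And>p q. {p,q} \<in> E \<Longrightarrow> p \<in> X \<Longrightarrow> q \<in> X"
  shows "gcomp E a \<subseteq> X"
proof
  fix z assume "z \<in> gcomp E a"
  then have "(a,z) \<in> (Rel E)\<^sup>*" unfolding gcomp_def by simp
  then show "z \<in> X"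
    by (induction rule: rtrancl_induct) (use assms in \<open>auto simp: Rel_def\<close>)
qed

lemma gcomp_induct[consumes 1, case_names base step]:
  assumes "z \<in> gcomp E a" "P a" "\<And>p q. p \<in> gcomp E a \<Longrightarrow> {p,q} \<in> E \<Longrightarrow> P p \<Longrightarrow> P q"
  shows "P z"
proof -
  have "(a,z) \<in> (Rel E)\<^sup>*" using assms(1) unfolding gcomp_def by simp
  then show ?thesis
    by (induction rule: rtrancl_induct)
       (use assms in \<open>auto simp: Rel_def gcomp_def\<close>)
qed

lemma gcomp_avoid:
  assumes "Z \<inter> gcomp E a = {}"
  shows "gcomp (delS E Z) a = gcomp E a"
proof
  show "gcomp (delS E Z) a \<subseteq> gcomp E a" by (rule gcomp_mono) (auto simp: delS_def)
  show "gcomp E a \<subseteq> gcomp (delS E Z) a"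
  proof (rule gcomp_closed)
    fix p q assume e: "{p,q} \<in> E" and p: "p \<in> gcomp (delS E Z) a"
    have "p \<in> gcomp E a" using p gcomp_mono[of "delS E Z" E] by (auto simp: delS_def)
    moreover have "q \<in> gcomp E a" using calculation e gcomp_edge gcomp_trans by metis
    ultimately have "{p,q} \<in> delS E Z" using e assms by (auto simp: delS_def)
    then show "q \<in> gcomp (delS E Z) a" using p gcomp_edge gcomp_trans by metis
  qed simp
qed

lemma gcomp_union_avoid:
  assumes "\<And>e. e \<in> F \<Longrightarrow> e \<inter> gcomp E a = {}"
  shows "gcomp (E \<union> F) a = gcomp E a"
proof
  show "gcomp E a \<subseteq> gcomp (E \<union> F) a" by (rule gcomp_mono) auto
  show "gcomp (E \<union> F) a \<subseteq> gcomp E a"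
  proof (rule gcomp_closed)
    fix p q assume e: "{p,q} \<in> E \<union> F" and p: "p \<in> gcomp E a"
    then have "{p,q} \<in> E" using assms by blast
    then show "q \<in> gcomp E a" using p gcomp_edge gcomp_trans by metis
  qed simp
qed




definition Fb :: "'a set set \<Rightarrow> bool" where
  "Fb E \<longleftrightarrow> (\<forall>a b. {a,b} \<in> E \<longrightarrow> a \<noteq> b \<longrightarrow> b \<notin> gcomp (E - {{a,b}}) a)"

lemma gcomp_same: "x \<in> gcomp E a \<Longrightarrow> y \<in> gcomp E a \<Longrightarrow> y \<in> gcomp E x"
  using gcomp_sym gcomp_trans by metis

lemma Fb_empty: "Fb {}" unfolding Fb_def by simp

lemma Fb_mono: "Fb E \<Longrightarrow> E' \<subseteq> E \<Longrightarrow> Fb E'"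
  unfolding Fb_def
proof (intro allI impI)
  fix a b assume F: "\<forall>a b. {a, b} \<in> E \<longrightarrow> a \<noteq> b \<longrightarrow> b \<notin> gcomp (E - {{a, b}}) a"
    and sub: "E' \<subseteq> E" and ab: "{a,b} \<in> E'" "a \<noteq> b"
  have "gcomp (E' - {{a,b}}) a \<subseteq> gcomp (E - {{a,b}}) a" using sub by (intro gcomp_mono) auto
  then show "b \<notin> gcomp (E' - {{a, b}}) a" using F ab sub by blast
qed

lemma Fb_local:
  assumes "Fb E" "{a,u1} \<in> E" "{a,u2} \<in> E" "u1 \<noteq> u2" "a \<noteq> u1" "a \<noteq> u2"
  shows "u2 \<notin> gcomp (delS E {a}) u1"
proof
  assume h: "u2 \<in> gcomp (delS E {a}) u1"
  have ne: "{a,u1} \<noteq> {a,u2}"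
  proof
    assume "{a,u1} = {a,u2}"
    then have "u1 \<in> {a,u2}" by blast
    then show False using assms(4,5) by blast
  qed
  have "{a,u1} \<in> E - {{a,u2}}" using assms(2) ne by blast
  then have 1: "u1 \<in> gcomp (E - {{a,u2}}) a" by (rule gcomp_edge)
  have "delS E {a} \<subseteq> E - {{a,u2}}" by (auto simp: delS_def)
  then have "gcomp (delS E {a}) u1 \<subseteq> gcomp (E - {{a,u2}}) u1" by (rule gcomp_mono)
  then have 2: "u2 \<in> gcomp (E - {{a,u2}}) u1" using h by blast
  have "u2 \<in> gcomp (E - {{a,u2}}) a" using gcomp_trans[OF 1 2] .
  moreover have "u2 \<notin> gcomp (E - {{a,u2}}) a" using assms(1,3,6) unfolding Fb_def by blast
  ultimately show False by blast
qed

lemma gcomp_insert_cases: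
  "gcomp (insert {p,q} F) a \<subseteq> gcomp F a \<union> gcomp F p \<union> gcomp F q"
proof (rule gcomp_closed)
  fix x y assume e: "{x,y} \<in> insert {p,q} F" and x: "x \<in> gcomp F a \<union> gcomp F p \<union> gcomp F q"
  show "y \<in> gcomp F a \<union> gcomp F p \<union> gcomp F q"
  proof (cases "{x,y} = {p,q}")
    case True then have "y \<in> {p,q}" by blast
    then show ?thesis by auto
  next
    case False then have "{x,y} \<in> F" using e by auto
    then have y: "y \<in> gcomp F x" by (rule gcomp_edge)
    from x show ?thesis
    proof (elim UnE)
      assume "x \<in> gcomp F a" then show ?thesis using y gcomp_trans[of x F a y] by simp
    next
      assume "x \<in> gcomp F p" then show ?thesis using y gcomp_trans[of x F p y] by simp
    next
      assume "x \<in> gcomp F q" then show ?thesis using y gcomp_trans[of x F q y] by simp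
    qed
  qed
qed simp

lemma gcomp_insert_out:
  assumes "p \<notin> gcomp F a" "q \<notin> gcomp F a"
  shows "gcomp (insert {p,q} F) a = gcomp F a"
proof -
  have "gcomp (F \<union> {{p,q}}) a = gcomp F a"
  proof (rule gcomp_union_avoid)
    fix e assume "e \<in> {{p,q}}" then show "e \<inter> gcomp F a = {}" using assms by auto
  qed
  then show ?thesis by simp
qed

lemma Fb_insert:
  assumes F: "Fb E" and pq: "p \<noteq> q" "q \<notin> gcomp E p"
  shows "Fb (insert {p,q} E)"
  unfolding Fb_def
proof (intro allI impI)
  fix a b assume ab: "{a,b} \<in> insert {p,q} E" "a \<noteq> b"
  show "b \<notin> gcomp (insert {p, q} E - {{a, b}}) a"
  proof (cases "{a,b} = {p,q}")
    case True
    have "gcomp (insert {p, q} E - {{a, b}}) a \<subseteq> gcomp E a" using True by (intro gcomp_mono) auto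
    moreover have "b \<notin> gcomp E a"
      using True pq gcomp_sym by (metis doubleton_eq_iff)
    ultimately show ?thesis by blast
  next
    case False
    let ?E' = "E - {{a,b}}"
    have eq: "insert {p, q} E - {{a, b}} = insert {p,q} ?E'" using False by auto
    have abE: "{a,b} \<in> E" using ab False by auto
    have nb: "b \<notin> gcomp ?E' a" using F abE ab(2) unfolding Fb_def by blast
    have sub: "gcomp ?E' x \<subseteq> gcomp E x" for x by (rule gcomp_mono) auto
    show ?thesis
    proof
      assume b: "b \<in> gcomp (insert {p, q} E - {{a, b}}) a"
      then have b': "b \<in> gcomp (insert {p,q} ?E') a" using eq by simp
      have a_in: "p \<in> gcomp ?E' a \<or> q \<in> gcomp ?E' a"
        using gcomp_insert_out[of p ?E' a q] b' nb by auto
      have b_in: "b \<in> gcomp ?E' p \<or> b \<in> gcomp ?E' q"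
        using gcomp_insert_cases[of p q ?E' a] b' nb by auto
      have "q \<in> gcomp E p"
      proof -
        have ba: "b \<in> gcomp E a" using abE by (rule gcomp_edge)
        { assume 1: "p \<in> gcomp ?E' a" and 2: "b \<in> gcomp ?E' p"
          have "b \<in> gcomp ?E' a" using gcomp_trans[OF 1 2] .
          then have False using nb by blast }
        moreover
        { assume 1: "q \<in> gcomp ?E' a" and 2: "b \<in> gcomp ?E' q"
          have "b \<in> gcomp ?E' a" using gcomp_trans[OF 1 2] .
          then have False using nb by blast }
        moreover
        { assume 1: "p \<in> gcomp ?E' a" and 2: "b \<in> gcomp ?E' q"
          have 3: "p \<in> gcomp E a" "b \<in> gcomp E q" using sub 1 2 by blast+
          have "b \<in> gcomp E p" using gcomp_same[OF 3(1) ba] .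
          moreover have "q \<in> gcomp E b" using gcomp_sym[OF 3(2)] .
          ultimately have ?thesis using gcomp_trans by metis }
        moreover
        { assume 1: "q \<in> gcomp ?E' a" and 2: "b \<in> gcomp ?E' p"
          have 3: "q \<in> gcomp E a" "b \<in> gcomp E p" using sub 1 2 by blast+
          have "b \<in> gcomp E q" using gcomp_same[OF 3(1) ba] .
          then have "q \<in> gcomp E b" by (rule gcomp_sym)
          then have ?thesis using 3(2) gcomp_trans by metis }
        ultimately show ?thesis using a_in b_in by blast
      qed
      then show False using pq by blast
    qed
  qed
qed



lemma gcomp_delS_mem: "y \<in> gcomp (delS E Z) u \<Longrightarrow> y = u \<or> y \<notin> Z"
proof -
  have "gcomp (delS E Z) u \<subseteq> insert u (- Z)"
  proof (rule gcomp_closed)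
    fix p q assume "{p,q} \<in> delS E Z"
    then have "{p,q} \<inter> Z = {}" by (simp add: delS_def)
    then show "q \<in> insert u (- Z)" by blast
  qed simp
  then show "y \<in> gcomp (delS E Z) u \<Longrightarrow> y = u \<or> y \<notin> Z" by blast
qed

lemma gcomp_split:
  assumes "v \<notin> Z"
  shows "gcomp (delS E Z) v \<subseteq> insert v (\<Union>u\<in>nbrs E v - Z. gcomp (delS E {v}) u)"
proof (rule gcomp_closed)
  fix p q assume e: "{p,q} \<in> delS E Z" and p: "p \<in> insert v (\<Union>u\<in>nbrs E v - Z. gcomp (delS E {v}) u)"
  have eE: "{p,q} \<in> E" and eZ: "{p,q} \<inter> Z = {}" using e by (auto simp: delS_def)
  show "q \<in> insert v (\<Union>u\<in>nbrs E v - Z. gcomp (delS E {v}) u)"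
  proof (cases "q = v")
    case True then show ?thesis by simp
  next
    case qv: False
    show ?thesis
    proof (cases "p = v")
      case True
      have "q \<in> nbrs E v" unfolding nbrs_def using eE qv True by simp
      moreover have "q \<notin> Z" using eZ by blast
      ultimately have "q \<in> nbrs E v - Z" by simp
      moreover have "q \<in> gcomp (delS E {v}) q" by simp
      ultimately show ?thesis by blast
    next
      case False
      then obtain u where u: "u \<in> nbrs E v - Z" "p \<in> gcomp (delS E {v}) u" using p by auto
      have "{p,q} \<in> delS E {v}" using eE False qv by (simp add: delS_def)
      then have "q \<in> gcomp (delS E {v}) p" by (rule gcomp_edge)
      then have "q \<in> gcomp (delS E {v}) u" using u(2) gcomp_trans by metis
      then show ?thesis using u(1) by blast
    qed
  qed
qed simp

lemma delS_empty[simp]: "delS E {} = E" by (auto simp: delS_def)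

lemma gcomp_subset_nodes: "gcomp E a \<subseteq> insert a (\<Union>E)"
  by (rule gcomp_closed) auto

lemma finite_gcomp: "finite E \<Longrightarrow> \<forall>e\<in>E. finite e \<Longrightarrow> finite (gcomp E a)"
  by (rule finite_subset[OF gcomp_subset_nodes]) auto

lemma nbrs_no_edge: "nbrs E v = {} \<Longrightarrow> gcomp E v = {v}"
proof -
  assume N: "nbrs E v = {}"
  have "gcomp E v \<subseteq> {v}"
  proof (rule gcomp_closed)
    fix p q assume "{p,q} \<in> E" "p \<in> {v}" then show "q \<in> {v}" using N by (auto simp: nbrs_def)
  qed simp
  then show ?thesis by auto
qed

lemma Wt_mono: "finite B \<Longrightarrow> A \<subseteq> B \<Longrightarrow> Wt w A \<le> Wt w B"
  unfolding Wt_def by (simp add: sum_mono2)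

lemma Wt_union: "finite A \<Longrightarrow> finite B \<Longrightarrow> A \<inter> B = {} \<Longrightarrow> Wt w (A \<union> B) = Wt w A + Wt w B"
proof -
  assume a: "finite A" "finite B" "A \<inter> B = {}"
  have "sum w (A \<union> B) = sum w A + sum w B" using sum.union_disjoint[OF a] .
  then show ?thesis unfolding Wt_def by simp
qed

lemma Wt_le_fun: "(\<And>x. w x \<le> w' x) \<Longrightarrow> Wt w A \<le> Wt w' A"
  unfolding Wt_def by (simp add: sum_mono)

lemma Wt_nonneg: "0 \<le> Wt w A" unfolding Wt_def by (simp only: of_nat_0_le_iff)

lemma sum_UN_le_nat: "finite I \<Longrightarrow> \<forall>i\<in>I. finite (A i) \<Longrightarrow>
   sum (w::'a \<Rightarrow> nat) (\<Union>i\<in>I. A i) \<le> (\<Sum>i\<in>I. sum w (A i))"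
proof (induction I rule: finite_induct)
  case empty then show ?case by simp
next
  case (insert i I)
  have "sum w (\<Union>j\<in>insert i I. A j) = sum w (A i \<union> (\<Union>j\<in>I. A j))" by simp
  also have "\<dots> \<le> sum w (A i) + sum w (\<Union>j\<in>I. A j)"
  proof -
    have f1: "finite (A i)" "finite (\<Union>j\<in>I. A j)" using insert by auto
    show ?thesis using sum.union_inter[OF f1, of w] by linarith
  qed
  also have "\<dots> \<le> sum w (A i) + (\<Sum>j\<in>I. sum w (A j))" using insert by simp
  finally show ?case using insert by simp
qed



lemma rem_bound:
  assumes fin: "finite (hE s)" "\<forall>e\<in>hE s. finite e"
    and K: "L \<le> Wt (wt s) (gcomp (hE s) v)"
    and T: "\<And>z. z \<in> nbrs (hE s) v \<Longrightarrow> L \<le> Wt (wt s) (gcomp (delS (hE s) {z}) v)"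
  shows "L \<le> rem s v"
proof -
  let ?E = "hE s" and ?w = "wt s"
  let ?N = "nbrs ?E v"
  let ?g = "\<lambda>u. Wt ?w (Tcomp ?E u v)"
  have finN: "finite ?N"
  proof -
    have "?N \<subseteq> \<Union>?E" by (auto simp: nbrs_def)
    then show ?thesis using fin by (meson finite_Union finite_subset)
  qed
  have fincomp: "finite (gcomp (delS ?E Z) x)" for Z x
    using fin by (intro finite_gcomp) (auto simp: delS_def)
  show ?thesis
  proof (cases "?N = {}")
    case True
    then have "rem s v = real (?w v)" unfolding rem_def by simp
    moreover have "Wt ?w (gcomp ?E v) = real (?w v)" using nbrs_no_edge[OF True] by (simp add: Wt_def)
    ultimately show ?thesis using K by simp
  next
    case False
    have ge0: "\<forall>u. 0 \<le> ?g u" by (simp add: Wt_nonneg)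
    obtain u0 where u0: "u0 \<in> ?N" "?g u0 = Max (insert 0 (?g ` ?N))"
    proof -
      have "finite (?g ` ?N)" "?g ` ?N \<noteq> {}" using finN False by auto
      then have "Max (?g ` ?N) \<in> ?g ` ?N" by (rule Max_in)
      then obtain u0 where "u0 \<in> ?N" "?g u0 = Max (?g ` ?N)" by auto
      moreover have "Max (insert 0 (?g ` ?N)) = max 0 (Max (?g ` ?N))"
        using finN False by (simp add: Max_insert)
      moreover have "0 \<le> Max (?g ` ?N)" using calculation(1,2) ge0 by metis
      ultimately show ?thesis using that by simp
    qed
    have "rem s v = (\<Sum>u\<in>?N - {u0}. ?g u) + real (?w v)"
      unfolding rem_def using u0 finN by (simp add: sum.remove)
    moreover have "Wt ?w (gcomp (delS ?E {u0}) v) \<le> (\<Sum>u\<in>?N - {u0}. ?g u) + real (?w v)"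
    proof -
      have v0: "v \<noteq> u0" using u0(1) by (auto simp: nbrs_def)
      have sub: "gcomp (delS ?E {u0}) v \<subseteq> insert v (\<Union>u\<in>?N - {u0}. gcomp (delS ?E {v}) u)"
        using gcomp_split[of v "{u0}" ?E] v0 by simp
      have finU: "finite (\<Union>u\<in>?N - {u0}. gcomp (delS ?E {v}) u)" using finN fincomp by auto
      have "Wt ?w (gcomp (delS ?E {u0}) v) \<le> Wt ?w (insert v (\<Union>u\<in>?N - {u0}. gcomp (delS ?E {v}) u))"
        using sub finU by (intro Wt_mono) auto
      also have "\<dots> \<le> real (?w v) + Wt ?w (\<Union>u\<in>?N - {u0}. gcomp (delS ?E {v}) u)"
      proof -
        let ?X = "\<Union>u\<in>?N - {u0}. gcomp (delS ?E {v}) u"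
        have h: "sum ?w (insert v ?X) \<le> ?w v + sum ?w ?X" using finU by (simp add: sum.insert_if)
        have "real (sum ?w (insert v ?X)) \<le> real (?w v + sum ?w ?X)" using h by (rule of_nat_mono)
        then show ?thesis unfolding Wt_def by (simp only: of_nat_add)
      qed
      also have "\<dots> \<le> real (?w v) + (\<Sum>u\<in>?N - {u0}. ?g u)"
      proof -
        have "sum ?w (\<Union>u\<in>?N - {u0}. gcomp (delS ?E {v}) u) \<le> (\<Sum>u\<in>?N - {u0}. sum ?w (gcomp (delS ?E {v}) u))"
          using finN fincomp by (intro sum_UN_le_nat) auto
        then show ?thesis unfolding Wt_def Tcomp_eq by (simp add: of_nat_sum[symmetric] del: of_nat_sum)
      qed
      finally show ?thesis by simp
    qed
    ultimately show ?thesis using T[OF u0(1)] by simp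
  qed
qed



definition PE :: "'a list \<Rightarrow> nat \<Rightarrow> 'a set set" where
  "PE xs m = {{xs ! i, xs ! ((i - 1) div 2)} | i. 0 < i \<and> i < m}"

lemma tree_PE: "tree_edges xs = PE xs (length xs)"
  unfolding tree_edges_def PE_def by simp

lemma PE_mono: "m \<le> m' \<Longrightarrow> PE xs m \<subseteq> PE xs m'"
  unfolding PE_def by auto

lemma PE_Suc: "PE xs (Suc m) = PE xs m \<union> (if 0 < m then {{xs ! m, xs ! ((m - 1) div 2)}} else {})"
  unfolding PE_def by (auto simp: less_Suc_eq)

lemma PE_edge: "0 < k \<Longrightarrow> k < m \<Longrightarrow> {xs ! k, xs ! ((k - 1) div 2)} \<in> PE xs m"
  unfolding PE_def by auto

lemma PE_nodes: "e \<in> PE xs m \<Longrightarrow> \<exists>i j. e = {xs ! i, xs ! j} \<and> i < m \<and> j < i"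
  unfolding PE_def by force

lemma PE_conn: "k < m \<Longrightarrow> xs ! k \<in> gcomp (PE xs m) (xs ! 0)"
proof (induction k rule: less_induct)
  case (less k)
  show ?case
  proof (cases "k = 0")
    case True then show ?thesis by simp
  next
    case False
    let ?p = "(k - 1) div 2"
    have "?p < k" using False by auto
    then have "xs ! ?p \<in> gcomp (PE xs m) (xs ! 0)" using less by auto
    moreover have "{xs ! ?p, xs ! k} \<in> PE xs m" using PE_edge[of k m xs] False less.prems
      by (simp add: insert_commute)
    ultimately show ?thesis using gcomp_edge gcomp_trans by metis
  qed
qed

lemma tree_conn:
  assumes "a \<in> set xs" "b \<in> set xs"
  shows "b \<in> gcomp (tree_edges xs) a"
proof -
  obtain i j where "i < length xs" "j < length xs" "a = xs ! i" "b = xs ! j"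
    using assms by (metis in_set_conv_nth)
  then show ?thesis unfolding tree_PE using PE_conn gcomp_sym gcomp_trans by metis
qed

lemma tree_nbrs:
  assumes d: "distinct xs" and i: "i < length xs" and y: "y \<in> nbrs (tree_edges xs) (xs ! i)"
  shows "(0 < i \<and> y = xs ! ((i - 1) div 2)) \<or> (2*i+1 < length xs \<and> y = xs ! (2*i+1))
       \<or> (2*i+2 < length xs \<and> y = xs ! (2*i+2))"
proof -
  from y obtain k where k: "{xs ! i, y} = {xs ! k, xs ! ((k - 1) div 2)}" "0 < k" "k < length xs"
    "y \<noteq> xs ! i"
    unfolding nbrs_def tree_edges_def by auto
  have pk: "(k - 1) div 2 < length xs" using k by auto
  show ?thesis
  proof (cases "xs ! i = xs ! k")
    case True
    then have "i = k" using d i k(3) nth_eq_iff_index_eq by blast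
    moreover have "y = xs ! ((k - 1) div 2)" using k True by (metis doubleton_eq_iff)
    ultimately show ?thesis using k by auto
  next
    case False
    then have "xs ! i = xs ! ((k - 1) div 2)" "y = xs ! k" using k by (metis doubleton_eq_iff)+
    then have "i = (k - 1) div 2" using d i pk nth_eq_iff_index_eq by blast
    then have "k = 2*i+1 \<or> k = 2*i+2" using k(2) by auto
    then show ?thesis using \<open>y = xs ! k\<close> k(3) by auto
  qed
qed

lemma tree_edge_nodes:
  "e \<in> tree_edges xs \<Longrightarrow> \<exists>a b. e = {a,b} \<and> a \<in> set xs \<and> b \<in> set xs \<and> (distinct xs \<longrightarrow> a \<noteq> b)"
proof -
  assume "e \<in> tree_edges xs"
  then obtain k where k: "e = {xs ! k, xs ! ((k - 1) div 2)}" "0 < k" "k < length xs"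
    unfolding tree_edges_def by auto
  have pk: "(k - 1) div 2 < k" using k by auto
  show ?thesis
  proof (intro exI conjI impI)
    show "e = {xs ! k, xs ! ((k - 1) div 2)}" by (rule k(1))
    show "xs ! k \<in> set xs" using k by simp
    show "xs ! ((k - 1) div 2) \<in> set xs" using k pk by simp
    show "xs ! k \<noteq> xs ! ((k - 1) div 2)" if "distinct xs"
      using that k pk nth_eq_iff_index_eq by fastforce
  qed
qed




definition wf_edges :: "'a set \<Rightarrow> 'a set set \<Rightarrow> bool" where
  "wf_edges V E \<longleftrightarrow> (\<forall>e\<in>E. \<exists>a b. e = {a,b} \<and> a \<noteq> b \<and> a \<in> V \<and> b \<in> V)"

definition Fv :: "'a set set \<Rightarrow> 'a dash_state \<Rightarrow> 'a \<Rightarrow> real" where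
  "Fv E0 s x = 2 powr (real_of_int (delta E0 (gE s) x) / 2)"

definition IDinv :: "'a dash_state \<Rightarrow> bool" where
  "IDinv s \<longleftrightarrow> (\<forall>a\<in>alive s. \<forall>b\<in>alive s. (cid s a = cid s b) = (b \<in> gcomp (hE s) a))"

definition Bnd :: "'a set set \<Rightarrow> 'a dash_state \<Rightarrow> bool" where
  "Bnd E0 s \<longleftrightarrow> (\<forall>x\<in>alive s. Fv E0 s x \<le> Wt (wt s) (gcomp (hE s) x) \<and>
      (\<forall>z\<in>nbrs (hE s) x. Fv E0 s x \<le> Wt (wt s) (gcomp (delS (hE s) {z}) x)))"

definition Inv :: "'a set \<Rightarrow> 'a set set \<Rightarrow> 'a dash_state \<Rightarrow> bool" where
  "Inv V0 E0 s \<longleftrightarrow> finite (alive s) \<and> alive s \<subseteq> V0 \<and> wf_edges (alive s) (gE s) \<and>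
     hE s \<subseteq> gE s \<and> Fb (hE s) \<and> IDinv s \<and> Bnd E0 s"

lemma dbl_mem: "{p,q} = {a,b} \<Longrightarrow> a \<in> X \<Longrightarrow> b \<in> X \<Longrightarrow> p \<in> X \<and> q \<in> X"
  by (auto simp: doubleton_eq_iff)

lemma nbrs_sym: "y \<in> nbrs E x \<longleftrightarrow> x \<in> nbrs E y"
  unfolding nbrs_def by (auto simp: insert_commute)

lemma Inv_init:
  assumes "finite V0" "simple_graph V0 E0" "inj_on iid V0"
  shows "Inv V0 E0 \<lparr>alive = V0, gE = E0, hE = {}, cid = iid, wt = (\<lambda>_. 1)\<rparr>"
proof -
  have c1: "gcomp {} a = {a}" for a :: 'a by (rule nbrs_no_edge) (simp add: nbrs_def)
  have wf: "wf_edges V0 E0" using assms(2) unfolding wf_edges_def simple_graph_def by blast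
  have id: "IDinv \<lparr>alive = V0, gE = E0, hE = {}, cid = iid, wt = (\<lambda>_. 1)\<rparr>"
    unfolding IDinv_def using assms(3) c1 by (auto simp: inj_on_def)
  have F1: "Fv E0 \<lparr>alive = V0, gE = E0, hE = {}, cid = iid, wt = (\<lambda>_. 1)\<rparr> x = 1" for x
    unfolding Fv_def delta_def by simp
  have bd: "Bnd E0 \<lparr>alive = V0, gE = E0, hE = {}, cid = iid, wt = (\<lambda>_. 1)\<rparr>"
    unfolding Bnd_def F1 using c1 by (simp add: Wt_def nbrs_def)
  show ?thesis unfolding Inv_def using assms(1) wf id bd Fb_empty by simp
qed

locale dstep =
  fixes V0 :: "'a set" and E0 :: "'a set set" and iid :: "'a \<Rightarrow> real" and s :: "'a dash_state"
    and v :: 'a and S :: "'a set" and xs :: "'a list" and c :: 'a and H :: "'a set set"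
    and E2 :: "'a set set"
  assumes inv: "Inv V0 E0 s"
    and inj: "inj_on iid V0"
    and vA: "v \<in> alive s"
    and Sdef: "S = UNset iid (cid s) (gE s) v \<union> nbrs (hE s) v"
    and setxs: "set xs = S" and dist: "distinct xs"
    and srt: "sorted (map (delta E0 (gE s)) xs)"
    and cc: "nbrs (hE s) v \<noteq> {} \<longrightarrow> c \<in> nbrs (hE s) v"
    and Hdef: "H = tree_edges xs"
    and E2def: "E2 = {e \<in> hE s. v \<notin> e} \<union> H"
begin

abbreviation "EE \<equiv> hE s"
abbreviation "GG \<equiv> gE s"
abbreviation "AA \<equiv> alive s"
abbreviation "ww \<equiv> wt s"
abbreviation "E1 \<equiv> delS (hE s) {v}"
abbreviation "P x \<equiv> gcomp (delS (hE s) {v}) x"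
abbreviation "UNS \<equiv> UNset iid (cid s) (gE s) v"
abbreviation "n \<equiv> length xs"
abbreviation "M \<equiv> \<Union>y\<in>S. P y"
abbreviation "G2 \<equiv> {e \<in> gE s. v \<notin> e} \<union> H"
abbreviation "w2 \<equiv> (if nbrs (hE s) v = {} then wt s else (wt s)(c := wt s c + wt s v))"
abbreviation "L x \<equiv> Fv E0 s x"

lemma finA: "finite AA" and AV0: "AA \<subseteq> V0" and wfG: "wf_edges AA GG" and EG: "EE \<subseteq> GG"
  and FbE: "Fb EE" and ID: "IDinv s" and BD: "Bnd E0 s"
  using inv unfolding Inv_def by auto

lemma finG: "finite GG"
proof -
  have "GG \<subseteq> Pow AA"
  proof
    fix e assume "e \<in> GG"
    then obtain a b where "e = {a,b}" "a \<in> AA" "b \<in> AA" using wfG unfolding wf_edges_def by blast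
    then show "e \<in> Pow AA" by simp
  qed
  then show ?thesis by (rule finite_subset) (simp add: finA)
qed

lemma finE: "finite EE" using finG EG by (rule finite_subset[rotated])

lemma edge_G: "{a,b} \<in> GG \<Longrightarrow> a \<in> AA \<and> b \<in> AA"
proof -
  assume h: "{a,b} \<in> GG"
  then obtain p q where "{a,b} = {p,q}" "p \<in> AA" "q \<in> AA" using wfG unfolding wf_edges_def by blast
  then have "{a,b} \<subseteq> AA" by simp
  then show ?thesis by simp
qed

lemma edge_fin: "e \<in> GG \<Longrightarrow> finite e"
  using wfG unfolding wf_edges_def by auto

lemma edgeE_fin: "\<forall>e\<in>EE. finite e" using edge_fin EG by blast

lemma finE1: "finite (delS EE Z)" using finE by (simp add: delS_def)

lemma fin_comp: "finite (gcomp (delS EE Z) x)"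
  using finE edgeE_fin by (intro finite_gcomp) (auto simp: delS_def)

lemma fin_compE: "finite (gcomp EE x)" using fin_comp[of "{}" x] by simp

lemma nbrsG_A: "y \<in> nbrs GG x \<Longrightarrow> y \<in> AA \<and> x \<in> AA \<and> y \<noteq> x"
  unfolding nbrs_def using edge_G by blast

lemma nbrsE_G: "nbrs EE x \<subseteq> nbrs GG x" using EG unfolding nbrs_def by blast

lemma fin_nbrsG: "finite (nbrs GG x)"
  proof -
  have "nbrs GG x \<subseteq> AA" using nbrsG_A by blast
  then show ?thesis using finA by (rule finite_subset)
qed

lemma compE_A: "x \<in> AA \<Longrightarrow> gcomp EE x \<subseteq> AA"
proof (rule gcomp_closed)
  fix p q assume "{p,q} \<in> EE" then show "q \<in> AA" using EG edge_G by blast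
qed

lemma cid_comp: "a \<in> AA \<Longrightarrow> b \<in> gcomp EE a \<Longrightarrow> cid s b = cid s a"
proof -
  assume a: "a \<in> AA" and b: "b \<in> gcomp EE a"
  then have "b \<in> AA" using compE_A by blast
  then have "(cid s a = cid s b) = (b \<in> gcomp EE a)" using ID a unfolding IDinv_def by blast
  then show ?thesis using b by simp
qed

lemma UN_G: "UNS \<subseteq> nbrs GG v" unfolding UNset_def by auto
lemma UN_cid: "x \<in> UNS \<Longrightarrow> cid s x \<noteq> cid s v" unfolding UNset_def by auto

lemma S_G: "S \<subseteq> nbrs GG v" using UN_G nbrsE_G Sdef by blast
lemma S_A: "S \<subseteq> AA - {v}" using S_G nbrsG_A by blast
lemma NE_S: "nbrs EE v \<subseteq> S" using Sdef by blast
lemma finS: "finite S" using setxs by auto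

lemma nbrE_comp: "x \<in> nbrs EE v \<Longrightarrow> x \<in> gcomp EE v"
  unfolding nbrs_def by (auto intro: gcomp_edge)

lemma UN_notcomp: "x \<in> UNS \<Longrightarrow> v \<notin> gcomp EE x"
proof
  assume x: "x \<in> UNS" and v: "v \<in> gcomp EE x"
  have "x \<in> AA" using x UN_G nbrsG_A by blast
  then have "cid s v = cid s x" using cid_comp v by blast
  then show False using UN_cid[OF x] by simp
qed

lemma P_UN: "x \<in> UNS \<Longrightarrow> P x = gcomp EE x"
  using UN_notcomp by (intro gcomp_avoid) auto

lemma P_sub: "P x \<subseteq> gcomp EE x" by (rule gcomp_mono) (auto simp: delS_def)

lemma P_nv: "x \<noteq> v \<Longrightarrow> v \<notin> P x" using gcomp_delS_mem[of v EE "{v}" x] by blast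

lemma P_bound: "x \<in> S \<Longrightarrow> L x \<le> Wt ww (P x)"
proof -
  assume xS: "x \<in> S"
  have xA: "x \<in> AA" using xS S_A by blast
  show ?thesis
  proof (cases "x \<in> nbrs EE v")
    case True
    then have "v \<in> nbrs EE x" using nbrs_sym[of x EE v] by simp
    then show ?thesis using BD xA unfolding Bnd_def by blast
  next
    case False
    then have "x \<in> UNS" using xS Sdef by blast
    then show ?thesis using BD xA P_UN unfolding Bnd_def by simp
  qed
qed

lemma S_sep:
  assumes s1: "s1 \<in> S" and s2: "s2 \<in> S" and ne: "s1 \<noteq> s2"
  shows "s2 \<notin> P s1"
proof
  assume h: "s2 \<in> P s1"
  have hE: "s2 \<in> gcomp EE s1" using h P_sub by blast
  have A1: "s1 \<in> AA" and A2: "s2 \<in> AA" using s1 s2 S_A by auto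
  show False
  proof (cases "s1 \<in> nbrs EE v")
    case n1: True
    show ?thesis
    proof (cases "s2 \<in> nbrs EE v")
      case True
      have "s2 \<notin> P s1"
        using Fb_local[OF FbE, of v s1 s2] n1 True ne unfolding nbrs_def by auto
      then show False using h by simp
    next
      case False
      then have u2: "s2 \<in> UNS" using s2 Sdef by blast
      have "s1 \<in> gcomp EE v" using n1 nbrE_comp by blast
      then have "s2 \<in> gcomp EE v" using gcomp_trans[OF _ hE] by blast
      then have "v \<in> gcomp EE s2" by (rule gcomp_sym)
      then show False using UN_notcomp u2 by blast
    qed
  next
    case False
    then have u1: "s1 \<in> UNS" using s1 Sdef by blast
    show ?thesis
    proof (cases "s2 \<in> nbrs EE v")
      case True
      have "s2 \<in> gcomp EE v" using True nbrE_comp by blast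
      then have "s1 \<in> gcomp EE v" using gcomp_trans[OF _ gcomp_sym[OF hE]] by blast
      then have "v \<in> gcomp EE s1" by (rule gcomp_sym)
      then show False using UN_notcomp u1 by blast
    next
      case False
      then have u2: "s2 \<in> UNS" using s2 Sdef by blast
      have cideq: "cid s s2 = cid s s1" using cid_comp A1 hE by blast
      have n2: "s2 \<in> nbrs GG v" and n1: "s1 \<in> nbrs GG v" using u1 u2 UN_G by auto
      have "iid s1 \<le> iid s2" using u1 n2 cideq unfolding UNset_def by auto
      moreover have "iid s2 \<le> iid s1" using u2 n1 cideq unfolding UNset_def by auto
      ultimately have "iid s1 = iid s2" by simp
      then show False using inj A1 A2 AV0 ne unfolding inj_on_def by blast
    qed
  qed
qed

lemma P_disj: "s1 \<in> S \<Longrightarrow> s2 \<in> S \<Longrightarrow> s1 \<noteq> s2 \<Longrightarrow> P s1 \<inter> P s2 = {}"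
proof (rule ccontr)
  assume s: "s1 \<in> S" "s2 \<in> S" "s1 \<noteq> s2" and "P s1 \<inter> P s2 \<noteq> {}"
  then obtain y where y: "y \<in> P s1" "y \<in> P s2" by blast
  have "s2 \<in> P y" using gcomp_sym[OF y(2)] .
  then have "s2 \<in> P s1" using gcomp_trans[OF y(1)] by blast
  then show False using S_sep s by blast
qed

lemma H_nodes: "e \<in> H \<Longrightarrow> \<exists>a b. e = {a,b} \<and> a \<in> S \<and> b \<in> S \<and> a \<noteq> b"
  using tree_edge_nodes[of e xs] Hdef setxs dist by auto

lemma H_nodes2: "{p,q} \<in> H \<Longrightarrow> p \<in> S \<and> q \<in> S \<and> p \<noteq> q"
proof -
  assume h: "{p,q} \<in> H"
  have "\<exists>a b. {p,q} = {a,b} \<and> a \<in> S \<and> b \<in> S \<and> a \<noteq> b" by (rule H_nodes[OF h])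
  then obtain a b where ab: "{p,q} = {a,b}" "a \<in> S" "b \<in> S" "a \<noteq> b" by blast
  have "p \<in> S \<and> q \<in> S" using dbl_mem[OF ab(1) ab(2) ab(3)] .
  moreover have "p \<noteq> q" using ab(1,4) by (auto simp: doubleton_eq_iff)
  ultimately show ?thesis by blast
qed

lemma H_conn: "a \<in> S \<Longrightarrow> b \<in> S \<Longrightarrow> b \<in> gcomp H a"
  using tree_conn[of a xs b] Hdef setxs by simp

lemma E1_eq: "E1 = {e \<in> EE. v \<notin> e}" by (auto simp: delS_def)
lemma E2_eq: "E2 = E1 \<union> H" using E2def E1_eq by simp

lemma H_avoid: "Z \<inter> S = {} \<Longrightarrow> H \<subseteq> delS E2 Z"
proof
  fix e assume Z: "Z \<inter> S = {}" and e: "e \<in> H"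
  obtain a b where "e = {a,b}" "a \<in> S" "b \<in> S" using H_nodes[OF e] by blast
  then have "e \<inter> Z = {}" using Z by blast
  then show "e \<in> delS E2 Z" using e E2_eq by (simp add: delS_def)
qed

lemma P_sub_E2: "P x \<subseteq> gcomp E2 x" using E2_eq by (intro gcomp_mono) auto

lemma inM: "t \<in> S \<Longrightarrow> y \<in> P t \<Longrightarrow> y \<in> M" by (rule UN_I)
lemma SM: "t \<in> S \<Longrightarrow> t \<in> M" using inM[of t t] by simp

lemma comp_E2_S: "x \<in> S \<Longrightarrow> gcomp E2 x = M"
proof
  assume xS: "x \<in> S"
  show "M \<subseteq> gcomp E2 x"
  proof
    fix y assume "y \<in> M"
    then obtain t where t: "t \<in> S" "y \<in> P t" by blast
    have "t \<in> gcomp H x" using H_conn xS t(1) by blast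
    moreover have "gcomp H x \<subseteq> gcomp E2 x" using E2_eq by (intro gcomp_mono) auto
    ultimately have tx: "t \<in> gcomp E2 x" by blast
    have yt: "y \<in> gcomp E2 t" using subsetD[OF P_sub_E2 t(2)] .
    show "y \<in> gcomp E2 x" using gcomp_trans[OF tx yt] .
  qed
  show "gcomp E2 x \<subseteq> M"
  proof (rule gcomp_closed)
    show "x \<in> M" using SM[OF xS] .
  next
    fix p q assume e: "{p,q} \<in> E2" and p: "p \<in> M"
    show "q \<in> M"
    proof (cases "{p,q} \<in> H")
      case True
      then have "q \<in> S" using H_nodes2 by blast
      then show ?thesis by (rule SM)
    next
      case False
      then have "{p,q} \<in> E1" using e E2_eq by blast
      then have qp: "q \<in> P p" by (rule gcomp_edge)
      obtain t where t: "t \<in> S" "p \<in> P t" using p by blast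
      show ?thesis using inM[OF t(1) gcomp_trans[OF t(2) qp]] .
    qed
  qed
qed

lemma notM:
  assumes a: "a \<in> AA - {v}" "a \<notin> M"
  shows "v \<notin> gcomp EE a" and "gcomp E2 a = gcomp EE a"
proof -
  show nv: "v \<notin> gcomp EE a"
  proof
    assume "v \<in> gcomp EE a"
    then have "a \<in> gcomp EE v" by (rule gcomp_sym)
    then have "a \<in> gcomp (delS EE {}) v" by simp
    then have "a \<in> insert v (\<Union>u\<in>nbrs EE v - {}. P u)" using gcomp_split[of v "{}" EE] by blast
    then obtain u where u: "u \<in> nbrs EE v" "a \<in> P u" using a by auto
    have "u \<in> S" using u(1) NE_S by blast
    then show False using inM[OF _ u(2)] a by blast
  qed
  have e1: "P a = gcomp EE a" using nv by (intro gcomp_avoid) auto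
  have "gcomp (E1 \<union> H) a = P a"
  proof (rule gcomp_union_avoid)
    fix e assume eH: "e \<in> H"
    obtain p q where pq: "e = {p,q}" "p \<in> S" "q \<in> S" using H_nodes[OF eH] by blast
    have "p \<notin> P a"
    proof
      assume "p \<in> P a" then have "a \<in> P p" by (rule gcomp_sym)
      then show False using inM[OF pq(2)] a by blast
    qed
    moreover have "q \<notin> P a"
    proof
      assume "q \<in> P a" then have "a \<in> P q" by (rule gcomp_sym)
      then show False using inM[OF pq(3)] a by blast
    qed
    ultimately show "e \<inter> P a = {}" using pq by blast
  qed
  then show "gcomp E2 a = gcomp EE a" using e1 E2_eq by simp
qed

lemma w2_ge: "ww x \<le> w2 x" by auto

lemma Wt_w2: "Wt ww X \<le> Wt w2 X" by (rule Wt_le_fun) (rule w2_ge)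

lemma fin_comp2: "finite (gcomp (delS E2 Z) x)"
proof -
  have "finite H" using Hdef unfolding tree_edges_def by simp
  moreover have "\<forall>e\<in>H. finite e"
  proof
    fix e assume eH: "e \<in> H"
    obtain p q where pq: "e = {p,q}" using H_nodes[OF eH] by blast
    then show "finite e" by simp
  qed
  ultimately have "finite E2" "\<forall>e\<in>E2. finite e" using E2_eq finE1[of "{v}"] edgeE_fin
    by (simp, auto simp: delS_def)
  then show ?thesis by (intro finite_gcomp) (auto simp: delS_def)
qed

end



context dstep begin

lemma E1_sub_E2: "E1 \<subseteq> E2" using E2_eq by blast

lemma G_main:
  assumes x: "x \<in> AA - {v}" and vZ: "v \<notin> Z"
    and cond: "v \<in> gcomp (delS EE Z) x \<Longrightarrow> Z \<inter> S = {}"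
  shows "Wt ww (gcomp (delS EE Z) x) \<le> Wt w2 (gcomp (delS E2 Z) x)"
proof -
  define T where "T = gcomp (delS EE Z) x"
  define T' where "T' = gcomp (delS E2 Z) x"
  define Q where "Q = {y. (y \<noteq> v \<longrightarrow> y \<in> T') \<and> (y = v \<longrightarrow> S \<subseteq> T')}"
  have xv: "x \<noteq> v" using x by blast
  have key: "T \<subseteq> T \<inter> Q" unfolding T_def
  proof (rule gcomp_closed)
    show "x \<in> gcomp (delS EE Z) x \<inter> Q" unfolding Q_def T'_def using xv by simp
  next
    fix p q assume e: "{p,q} \<in> delS EE Z" and p: "p \<in> gcomp (delS EE Z) x \<inter> Q"
    have pT: "p \<in> gcomp (delS EE Z) x" using p by blast
    have qT: "q \<in> gcomp (delS EE Z) x" using gcomp_trans[OF pT gcomp_edge[OF e]] .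
    have eE: "{p,q} \<in> EE" and eZ: "{p,q} \<inter> Z = {}" using e by (auto simp: delS_def)
    have pQ: "p \<in> Q" using p by blast
    have T'cl: "y \<in> T' \<Longrightarrow> gcomp (delS E2 Z) y \<subseteq> T'" for y unfolding T'_def by (rule gcomp_sub)
    have "q \<in> Q"
    proof (cases "q = v")
      case qv: True
      show ?thesis
      proof (cases "p = v")
        case True then show ?thesis using pQ qv by (simp add: Q_def)
      next
        case pv: False
        have "v \<in> gcomp (delS EE Z) x" using qT qv by simp
        then have ZS: "Z \<inter> S = {}" by (rule cond)
        have "{v,p} \<in> EE" using eE qv by (simp add: insert_commute)
        then have "p \<in> nbrs EE v" using pv by (simp add: nbrs_def)
        then have pS: "p \<in> S" using NE_S by blast
        have pT': "p \<in> T'" using pQ pv by (simp add: Q_def)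
        have "S \<subseteq> T'"
        proof
          fix t assume tS: "t \<in> S"
          have "t \<in> gcomp H p" using H_conn[OF pS tS] .
          moreover have "gcomp H p \<subseteq> gcomp (delS E2 Z) p" using H_avoid[OF ZS] by (rule gcomp_mono)
          ultimately show "t \<in> T'" using T'cl[OF pT'] by blast
        qed
        then show ?thesis using qv by (simp add: Q_def)
      qed
    next
      case qv: False
      show ?thesis
      proof (cases "p = v")
        case True
        have "{v,q} \<in> EE" using eE True by simp
        then have "q \<in> nbrs EE v" using qv by (simp add: nbrs_def)
        then have "q \<in> S" using NE_S by blast
        moreover have "S \<subseteq> T'" using pQ True by (simp add: Q_def)
        ultimately show ?thesis using qv by (auto simp: Q_def)
      next
        case pv: False
        have pT': "p \<in> T'" using pQ pv by (simp add: Q_def)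
        have "{p,q} \<in> E1" using eE pv qv by (simp add: delS_def)
        then have "{p,q} \<in> delS E2 Z" using E1_sub_E2 eZ by (auto simp: delS_def)
        then have "q \<in> gcomp (delS E2 Z) p" by (rule gcomp_edge)
        then have "q \<in> T'" using T'cl[OF pT'] by blast
        then show ?thesis using qv by (simp add: Q_def)
      qed
    qed
    then show "q \<in> gcomp (delS EE Z) x \<inter> Q" using qT by blast
  qed
  have finT: "finite T" unfolding T_def by (rule fin_comp)
  have finT': "finite T'" unfolding T'_def by (rule fin_comp2)
  show ?thesis
  proof (cases "v \<in> T")
    case False
    have "T \<subseteq> T'"
    proof
      fix y assume "y \<in> T"
      then have "y \<in> Q" "y \<noteq> v" using key False by auto
      then show "y \<in> T'" by (simp add: Q_def)
    qed
    then have "Wt ww T \<le> Wt ww T'" using finT' by (rule Wt_mono[rotated])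
    also have "\<dots> \<le> Wt w2 T'" by (rule Wt_w2)
    finally show ?thesis unfolding T_def T'_def .
  next
    case vT: True
    have ST': "S \<subseteq> T'" using vT key by (auto simp: Q_def)
    have NEne: "nbrs EE v \<noteq> {}"
    proof
      assume N: "nbrs EE v = {}"
      have "T \<subseteq> gcomp EE x" unfolding T_def by (rule gcomp_mono) (auto simp: delS_def)
      then have "v \<in> gcomp EE x" using vT by blast
      then have "x \<in> gcomp EE v" by (rule gcomp_sym)
      then show False using nbrs_no_edge[OF N] xv by simp
    qed
    then have cN: "c \<in> nbrs EE v" using cc by simp
    have cS: "c \<in> S" using cN NE_S by blast
    have cv: "c \<noteq> v" using cN by (simp add: nbrs_def)
    have w2eq: "w2 = ww(c := ww c + ww v)" using NEne by simp
    define X where "X = T - {v}"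
    define Y where "Y = insert c X"
    have XT': "X \<subseteq> T'"
    proof
      fix y assume "y \<in> X"
      then have "y \<in> Q" "y \<noteq> v" using key unfolding X_def by auto
      then show "y \<in> T'" by (simp add: Q_def)
    qed
    have YT': "Y \<subseteq> T'" unfolding Y_def using XT' cS ST' by blast
    have finX: "finite X" unfolding X_def using finT by simp
    have finY: "finite Y" unfolding Y_def using finX by simp
    have s1: "sum ww T = ww v + sum ww X"
      unfolding X_def using finT vT by (simp add: sum.remove)
    define w3 where "w3 = ww(c := ww c + ww v)"
    have w23: "w2 = w3" using w2eq unfolding w3_def by simp
    have cY: "c \<in> Y" unfolding Y_def by simp
    have s2: "sum w3 Y = ww c + ww v + sum ww (Y - {c})"
    proof -
      have "sum w3 Y = w3 c + sum w3 (Y - {c})" by (rule sum.remove[OF finY cY])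
      moreover have "sum w3 (Y - {c}) = sum ww (Y - {c})" by (rule sum.cong) (auto simp: w3_def)
      moreover have "w3 c = ww c + ww v" by (simp add: w3_def)
      ultimately show ?thesis by simp
    qed
    have s3: "ww c + sum ww (Y - {c}) = sum ww Y" using sum.remove[OF finY cY, of ww] by simp
    have s4: "sum ww X \<le> sum ww Y" using finY unfolding Y_def by (intro sum_mono2) auto
    have "sum ww T \<le> sum w3 Y" using s1 s2 s3 s4 by linarith
    moreover have "sum w3 Y \<le> sum w3 T'" by (rule sum_mono2[OF finT' YT']) simp
    ultimately have "sum ww T \<le> sum w3 T'" by linarith
    then have "sum ww T \<le> sum w2 T'" using w23 by simp
    then show ?thesis unfolding Wt_def T_def T'_def by (simp only: of_nat_le_iff)
  qed
qed

lemma Zok: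
  assumes x: "x \<in> AA - {v}" and z: "z \<in> nbrs EE x" and zv: "z \<noteq> v"
    and vin: "v \<in> gcomp (delS EE {z}) x"
  shows "z \<notin> S"
proof
  assume zS: "z \<in> S"
  have xz: "{x,z} \<in> EE" "z \<noteq> x" using z by (auto simp: nbrs_def)
  have zx: "z \<in> gcomp EE x" using gcomp_edge[OF xz(1)] .
  have "gcomp (delS EE {z}) x \<subseteq> gcomp EE x" by (rule gcomp_mono) (auto simp: delS_def)
  then have vx: "v \<in> gcomp EE x" using vin by blast
  show False
  proof (cases "z \<in> nbrs EE v")
    case True
    have zvE: "{z,v} \<in> EE" using True by (simp add: nbrs_def insert_commute)
    have nv: "v \<notin> gcomp (EE - {{z,v}}) z" using FbE zvE zv unfolding Fb_def by blast
    have ne: "{z,x} \<noteq> {z,v}"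
    proof
      assume "{z,x} = {z,v}"
      then have "x \<in> {z,v}" by (metis insertI1 insert_commute)
      then show False using x xz(2) by auto
    qed
    have "{z,x} \<in> EE - {{z,v}}" using xz(1) ne by (simp add: insert_commute)
    then have 1: "x \<in> gcomp (EE - {{z,v}}) z" by (rule gcomp_edge)
    have "gcomp (delS EE {z}) x \<subseteq> gcomp (EE - {{z,v}}) x" by (rule gcomp_mono) (auto simp: delS_def)
    then have 2: "v \<in> gcomp (EE - {{z,v}}) x" using vin by blast
    show False using gcomp_trans[OF 1 2] nv by simp
  next
    case False
    then have "z \<in> UNS" using zS Sdef by blast
    moreover have "v \<in> gcomp EE z" using gcomp_same[OF zx vx] .
    ultimately show False using UN_notcomp by blast
  qed
qed

abbreviation "dd i \<equiv> (if 0 < i then 1 else 0) + (if 2*i+1 < n then 1 else 0) + (if 2*i+2 < n then 1 else (0::nat))"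
abbreviation "L2 x \<equiv> 2 powr (real_of_int (delta E0 G2 x) / 2)"

lemma nbrsG2: "nbrs G2 x \<subseteq> (nbrs GG x - {v}) \<union> nbrs H x"
  unfolding nbrs_def by auto

lemma nbrsH_notS: "x \<notin> S \<Longrightarrow> nbrs H x = {}"
  unfolding nbrs_def using H_nodes2 by blast

lemma fin_nbrsH: "finite (nbrs H x)"
proof -
  have "nbrs H x \<subseteq> S" unfolding nbrs_def using H_nodes2 by blast
  then show ?thesis using finS by (rule finite_subset)
qed

lemma nbrsH_S: "i < n \<Longrightarrow> card (nbrs H (xs!i)) \<le> dd i"
proof -
  assume i: "i < n"
  define B1 where "B1 = (if 0 < i then {xs ! ((i - 1) div 2)} else {})"
  define B2 where "B2 = (if 2*i+1 < n then {xs ! (2*i+1)} else {})"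
  define B3 where "B3 = (if 2*i+2 < n then {xs ! (2*i+2)} else {})"
  have "nbrs H (xs!i) \<subseteq> B1 \<union> B2 \<union> B3"
  proof
    fix y assume "y \<in> nbrs H (xs!i)"
    then have "y \<in> nbrs (tree_edges xs) (xs!i)" using Hdef by simp
    from tree_nbrs[OF dist i this] show "y \<in> B1 \<union> B2 \<union> B3"
    proof (elim disjE conjE)
      assume "0 < i" "y = xs ! ((i - 1) div 2)" then have "y \<in> B1" unfolding B1_def by simp
      then show ?thesis by blast
    next
      assume "2*i+1 < n" "y = xs ! (2*i+1)" then have "y \<in> B2" unfolding B2_def by simp
      then show ?thesis by blast
    next
      assume "2*i+2 < n" "y = xs ! (2*i+2)" then have "y \<in> B3" unfolding B3_def by simp
      then show ?thesis by blast
    qed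
  qed
  then have "card (nbrs H (xs!i)) \<le> card (B1 \<union> B2 \<union> B3)"
    by (rule card_mono[rotated]) (simp add: B1_def B2_def B3_def)
  also have "\<dots> \<le> card B1 + card B2 + card B3"
    by (metis (no_types, lifting) add_le_mono card_Un_le le_refl order_trans)
  also have "\<dots> = dd i" unfolding B1_def B2_def B3_def by simp
  finally show ?thesis .
qed

lemma delta_notS: "x \<notin> S \<Longrightarrow> delta E0 G2 x \<le> delta E0 GG x"
proof -
  assume xS: "x \<notin> S"
  have "nbrs G2 x \<subseteq> nbrs GG x" using nbrsG2[of x] nbrsH_notS[OF xS] by blast
  then have "card (nbrs G2 x) \<le> card (nbrs GG x)" using fin_nbrsG by (intro card_mono)
  then show ?thesis unfolding delta_def by simp
qed

lemma delta_S: "i < n \<Longrightarrow> delta E0 G2 (xs!i) \<le> delta E0 GG (xs!i) - 1 + int (dd i)"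
proof -
  assume i: "i < n"
  let ?x = "xs!i"
  have xS: "?x \<in> S" using i setxs by auto
  have "?x \<in> nbrs GG v" using xS S_G by blast
  then have vN: "v \<in> nbrs GG ?x" using nbrs_sym[of ?x GG v] by simp
  have "card (nbrs G2 ?x) \<le> card ((nbrs GG ?x - {v}) \<union> nbrs H ?x)"
    using nbrsG2 fin_nbrsG fin_nbrsH by (intro card_mono) auto
  also have "\<dots> \<le> card (nbrs GG ?x - {v}) + card (nbrs H ?x)" by (rule card_Un_le)
  also have "\<dots> \<le> (card (nbrs GG ?x) - 1) + dd i" using nbrsH_S[OF i] vN fin_nbrsG by simp
  finally have "card (nbrs G2 ?x) \<le> (card (nbrs GG ?x) - 1) + dd i" .
  moreover have "card (nbrs GG ?x) \<ge> 1" using vN fin_nbrsG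
    by (metis One_nat_def Suc_leI card_gt_0_iff empty_iff)
  ultimately have "int (card (nbrs G2 ?x)) \<le> int (card (nbrs GG ?x)) - 1 + int (dd i)" by linarith
  then show ?thesis unfolding delta_def by simp
qed

lemma L2_notS: "x \<notin> S \<Longrightarrow> L2 x \<le> L x"
  unfolding Fv_def using delta_notS by (intro powr_mono) auto

lemma L2_S: "i < n \<Longrightarrow> L2 (xs!i) \<le> (if 2 \<le> dd i then 2 * L (xs!i) else L (xs!i))"
proof -
  assume i: "i < n"
  have d: "delta E0 G2 (xs!i) \<le> delta E0 GG (xs!i) - 1 + int (dd i)" using delta_S[OF i] .
  have d3: "dd i \<le> 3" by simp
  show ?thesis
  proof (cases "2 \<le> dd i")
    case True
    have "real_of_int (delta E0 G2 (xs!i)) / 2 \<le> real_of_int (delta E0 GG (xs!i)) / 2 + 1"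
      using d d3 by linarith
    then have "L2 (xs!i) \<le> 2 powr (real_of_int (delta E0 GG (xs!i)) / 2 + 1)"
      by (intro powr_mono) auto
    also have "\<dots> = 2 * L (xs!i)" unfolding Fv_def by (simp add: powr_add)
    finally show ?thesis using True by simp
  next
    case False
    then have "real_of_int (delta E0 G2 (xs!i)) / 2 \<le> real_of_int (delta E0 GG (xs!i)) / 2"
      using d by linarith
    then have "L2 (xs!i) \<le> L (xs!i)" unfolding Fv_def by (intro powr_mono) auto
    then show ?thesis using False by simp
  qed
qed

lemma L_sorted: "i \<le> k \<Longrightarrow> k < n \<Longrightarrow> L (xs!i) \<le> L (xs!k)"
proof -
  assume ik: "i \<le> k" "k < n"
  have "map (delta E0 GG) xs ! i \<le> map (delta E0 GG) xs ! k"
    using sorted_nth_mono[OF srt ik(1)] ik by simp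
  then have "delta E0 GG (xs!i) \<le> delta E0 GG (xs!k)" using ik by simp
  then show ?thesis unfolding Fv_def by (intro powr_mono) auto
qed

lemma one_piece: "t \<in> S \<Longrightarrow> P t \<subseteq> T \<Longrightarrow> finite T \<Longrightarrow> L t \<le> Wt w2 T"
proof -
  assume t: "t \<in> S" "P t \<subseteq> T" "finite T"
  have "L t \<le> Wt ww (P t)" using P_bound t(1) .
  also have "\<dots> \<le> Wt ww T" using t(3,2) by (rule Wt_mono)
  also have "\<dots> \<le> Wt w2 T" by (rule Wt_w2)
  finally show ?thesis .
qed

lemma two_pieces:
  assumes "s1 \<in> S" "s2 \<in> S" "s1 \<noteq> s2" "P s1 \<subseteq> T" "P s2 \<subseteq> T" "finite T"
  shows "L s1 + L s2 \<le> Wt w2 T"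
proof -
  have "L s1 + L s2 \<le> Wt ww (P s1) + Wt ww (P s2)" using P_bound assms(1,2) by (simp add: add_mono)
  also have "\<dots> = Wt ww (P s1 \<union> P s2)" using P_disj[OF assms(1-3)] fin_comp
    by (simp add: Wt_union)
  also have "\<dots> \<le> Wt ww T" using assms(4-6) by (intro Wt_mono) auto
  also have "\<dots> \<le> Wt w2 T" by (rule Wt_w2)
  finally show ?thesis .
qed

lemma piece_in:
  assumes t: "t \<in> S" and tx: "t \<in> gcomp (delS E2 {z}) x" and zt: "z \<notin> P t"
  shows "P t \<subseteq> gcomp (delS E2 {z}) x"
proof -
  have "{z} \<inter> P t = {}" using zt by blast
  then have "gcomp (delS E1 {z}) t = P t" by (rule gcomp_avoid)
  moreover have "gcomp (delS E1 {z}) t \<subseteq> gcomp (delS E2 {z}) t"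
    using E1_sub_E2 by (intro gcomp_mono) (auto simp: delS_def)
  moreover have "gcomp (delS E2 {z}) t \<subseteq> gcomp (delS E2 {z}) x" using tx by (rule gcomp_sub)
  ultimately show ?thesis by blast
qed

lemma H_tree: "H = PE xs n" using Hdef tree_PE by simp

lemma xs_inj: "a < n \<Longrightarrow> b < n \<Longrightarrow> xs!a = xs!b \<longleftrightarrow> a = b"
  using dist by (simp add: nth_eq_iff_index_eq)

lemma H_direct:
  assumes "0 < k" "k < n" "j < n" "j \<noteq> k" "j \<noteq> (k - 1) div 2"
  shows "xs ! ((k - 1) div 2) \<in> gcomp (delS E2 {xs!j}) (xs!k)"
proof -
  have pk: "(k - 1) div 2 < n" using assms by auto
  have "{xs!k, xs ! ((k - 1) div 2)} \<in> H" using H_tree PE_edge[OF assms(1,2)] by simp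
  moreover have "xs!j \<noteq> xs!k" "xs!j \<noteq> xs ! ((k - 1) div 2)" using xs_inj assms pk by auto
  ultimately have "{xs!k, xs ! ((k - 1) div 2)} \<in> delS E2 {xs!j}" using E2_eq by (auto simp: delS_def)
  then show ?thesis by (rule gcomp_edge)
qed

lemma PE_avoid: "j < n \<Longrightarrow> m \<le> j \<Longrightarrow> PE xs m \<subseteq> delS E2 {xs!j}"
proof
  fix e assume j: "j < n" "m \<le> j" and e: "e \<in> PE xs m"
  obtain a b where ab: "e = {xs!a, xs!b}" "a < m" "b < a" using PE_nodes[OF e] by blast
  have "e \<in> H" using e PE_mono[of m n xs] j H_tree by auto
  moreover have "xs!j \<noteq> xs!a" "xs!j \<noteq> xs!b" using xs_inj ab j by auto
  ultimately show "e \<in> delS E2 {xs!j}" using ab E2_eq by (auto simp: delS_def)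
qed

lemma PE_path: "i < j \<Longrightarrow> k < j \<Longrightarrow> j < n \<Longrightarrow> xs!k \<in> gcomp (delS E2 {xs!j}) (xs!i)"
proof -
  assume h: "i < j" "k < j" "j < n"
  have "xs!k \<in> gcomp (PE xs j) (xs!0)" "xs!i \<in> gcomp (PE xs j) (xs!0)" using PE_conn h by auto
  then have "xs!k \<in> gcomp (PE xs j) (xs!i)" using gcomp_same by metis
  moreover have "gcomp (PE xs j) (xs!i) \<subseteq> gcomp (delS E2 {xs!j}) (xs!i)"
    using PE_avoid[OF h(3)] by (intro gcomp_mono) auto
  ultimately show ?thesis by blast
qed

end



context dstep begin

lemma two_k:
  assumes "i \<le> k1" "i \<le> k2" "k1 \<noteq> k2" "k1 < n" "k2 < n"
    "P (xs!k1) \<subseteq> T" "P (xs!k2) \<subseteq> T" "finite T"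
  shows "2 * L (xs!i) \<le> Wt w2 T"
proof -
  have S1: "xs!k1 \<in> S" and S2: "xs!k2 \<in> S" using assms(4,5) setxs by auto
  have ne: "xs!k1 \<noteq> xs!k2" using xs_inj assms(3-5) by auto
  have "L (xs!k1) + L (xs!k2) \<le> Wt w2 T" using two_pieces[OF S1 S2 ne assms(6-8)] .
  moreover have "L (xs!i) \<le> L (xs!k1)" "L (xs!i) \<le> L (xs!k2)" using L_sorted assms by auto
  ultimately show ?thesis by linarith
qed

lemma B_bound:
  assumes i: "i < n" and fT: "finite T" and Px: "P (xs!i) \<subseteq> T"
    and more: "2 \<le> dd i \<Longrightarrow> \<exists>k. i < k \<and> k < n \<and> P (xs!k) \<subseteq> T"
  shows "L2 (xs!i) \<le> Wt w2 T"
proof -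
  have xS: "xs!i \<in> S" using i setxs by auto
  have "(if 2 \<le> dd i then 2 * L (xs!i) else L (xs!i)) \<le> Wt w2 T"
  proof (cases "2 \<le> dd i")
    case True
    then obtain k where k: "i < k" "k < n" "P (xs!k) \<subseteq> T" using more by blast
    have "2 * L (xs!i) \<le> Wt w2 T" using two_k[of i i k] k i Px fT by auto
    then show ?thesis using True by simp
  next
    case False
    then show ?thesis using one_piece[OF xS Px fT] by simp
  qed
  then show ?thesis using L2_S[OF i] by linarith
qed

lemma dd_c1: "2 \<le> dd i \<Longrightarrow> 2*i+1 < n"
  by (cases "2*i+1 < n"; cases "2*i+2 < n"; cases "0 < i") auto

lemma Bnd_x:
  assumes x: "x \<in> AA - {v}"
  shows "L2 x \<le> Wt w2 (gcomp E2 x) \<and> (\<forall>z\<in>nbrs E2 x. L2 x \<le> Wt w2 (gcomp (delS E2 {z}) x))"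
proof (cases "x \<in> S")
  case False
  have K: "L2 x \<le> Wt w2 (gcomp E2 x)"
  proof -
    have "L2 x \<le> L x" using L2_notS[OF False] .
    also have "\<dots> \<le> Wt ww (gcomp EE x)" using BD x unfolding Bnd_def by blast
    also have "\<dots> \<le> Wt w2 (gcomp E2 x)" using G_main[OF x, of "{}"] by simp
    finally show ?thesis .
  qed
  have T: "L2 x \<le> Wt w2 (gcomp (delS E2 {z}) x)" if z: "z \<in> nbrs E2 x" for z
  proof -
    have e: "{x,z} \<in> E2" "z \<noteq> x" using z by (auto simp: nbrs_def)
    have "{x,z} \<notin> H" using H_nodes2 False by blast
    then have "{x,z} \<in> E1" using e E2_eq by blast
    then have eE: "{x,z} \<in> EE" and zv: "z \<noteq> v" by (auto simp: delS_def)
    have zN: "z \<in> nbrs EE x" using eE e(2) by (simp add: nbrs_def)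
    have "L2 x \<le> L x" using L2_notS[OF False] .
    also have "\<dots> \<le> Wt ww (gcomp (delS EE {z}) x)" using BD x zN unfolding Bnd_def by blast
    also have "\<dots> \<le> Wt w2 (gcomp (delS E2 {z}) x)"
    proof (rule G_main[OF x])
      show "v \<notin> {z}" using zv by simp
      show "{z} \<inter> S = {}" if "v \<in> gcomp (delS EE {z}) x" using Zok[OF x zN zv that] by simp
    qed
    finally show ?thesis .
  qed
  show ?thesis using K T by blast
next
  case True
  then obtain i where i: "i < n" "x = xs!i" using setxs by (metis in_set_conv_nth)
  have xS: "x \<in> S" using True .
  have K: "L2 x \<le> Wt w2 (gcomp E2 x)"
  proof -
    have M: "gcomp E2 x = M" using comp_E2_S[OF xS] .
    have fM: "finite (gcomp E2 x)" using fin_comp2[of "{}" x] by simp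
    show ?thesis unfolding i(2)
    proof (rule B_bound[OF i(1)])
      show "finite (gcomp E2 (xs!i))" using fM i by simp
      show "P (xs!i) \<subseteq> gcomp E2 (xs!i)" using P_sub_E2 .
      assume "2 \<le> dd i"
      then have k: "2*i+1 < n" by (rule dd_c1)
      have "xs!(2*i+1) \<in> S" using k setxs by auto
      then have "P (xs!(2*i+1)) \<subseteq> M" using inM by blast
      then show "\<exists>k. i < k \<and> k < n \<and> P (xs!k) \<subseteq> gcomp E2 (xs!i)" using k M i by (intro exI[of _ "2*i+1"]) auto
    qed
  qed
  have T: "L2 x \<le> Wt w2 (gcomp (delS E2 {z}) x)" if z: "z \<in> nbrs E2 x" for z
  proof -
    have e: "{x,z} \<in> E2" "z \<noteq> x" using z by (auto simp: nbrs_def)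
    have fT: "finite (gcomp (delS E2 {z}) x)" by (rule fin_comp2)
    show ?thesis
    proof (cases "{x,z} \<in> H")
      case True
      have zS: "z \<in> S" using H_nodes2[OF True] by blast
      have zPx: "z \<notin> P x" using S_sep[OF xS zS] e(2) by blast
      have Px: "P x \<subseteq> gcomp (delS E2 {z}) x" using piece_in[OF xS _ zPx] by simp
      have zN: "z \<in> nbrs (tree_edges xs) (xs!i)" using True e(2) Hdef i(2) by (simp add: nbrs_def)
      show ?thesis unfolding i(2)
      proof (rule B_bound[OF i(1)])
        show "finite (gcomp (delS E2 {z}) (xs ! i))" using fT i by simp
        show "P (xs ! i) \<subseteq> gcomp (delS E2 {z}) (xs ! i)" using Px i by simp
        assume dd2: "2 \<le> dd i"
        have c1: "2*i+1 < n" using dd_c1[OF dd2] .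
        obtain k where k: "i < k" "k < n" "xs!k \<noteq> z" "xs!k \<in> gcomp (delS E2 {z}) (xs!i)"
        proof -
          from tree_nbrs[OF dist i(1) zN] show ?thesis
          proof (elim disjE conjE)
            assume i0: "0 < i" and zp: "z = xs ! ((i - 1) div 2)"
            let ?p = "(i - 1) div 2"
            have "xs ! ((2*i+1 - 1) div 2) \<in> gcomp (delS E2 {xs!?p}) (xs!(2*i+1))"
              using H_direct[of "2*i+1" ?p] c1 i0 i(1) by auto
            then have "xs!(2*i+1) \<in> gcomp (delS E2 {z}) (xs!i)" using zp gcomp_sym by simp
            moreover have "xs!(2*i+1) \<noteq> z" using zp xs_inj c1 i(1) by auto
            ultimately show ?thesis using that[of "2*i+1"] c1 by simp
          next
            assume zc: "z = xs ! (2*i+1)"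
            show ?thesis
            proof (cases "2*i+2 < n")
              case c2: True
              have "xs ! ((2*i+2 - 1) div 2) \<in> gcomp (delS E2 {xs!(2*i+1)}) (xs!(2*i+2))"
                using H_direct[of "2*i+2" "2*i+1"] c2 by auto
              then have "xs!(2*i+2) \<in> gcomp (delS E2 {z}) (xs!i)" using zc gcomp_sym by simp
              moreover have "xs!(2*i+2) \<noteq> z" using zc xs_inj c2 by auto
              ultimately show ?thesis using that[of "2*i+2"] c2 by simp
            next
              case c2: False
              then have i0: "0 < i" using dd2 by (cases "0 < i") (auto split: if_splits)
              have "xs!(i+1) \<in> gcomp (delS E2 {z}) (xs!i)"
                using PE_path[of i "2*i+1" "i+1"] zc i0 c1 by auto
              moreover have "xs!(i+1) \<noteq> z" using zc xs_inj c1 i0 by auto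
              ultimately show ?thesis using that[of "i+1"] c1 i0 by simp
            qed
          next
            assume c2: "2*i+2 < n" and zc: "z = xs ! (2*i+2)"
            have "xs!(i+1) \<in> gcomp (delS E2 {z}) (xs!i)"
              using PE_path[of i "2*i+2" "i+1"] zc c2 by auto
            moreover have "xs!(i+1) \<noteq> z" using zc xs_inj c2 by auto
            ultimately show ?thesis using that[of "i+1"] c2 by simp
          qed
        qed
        have kS: "xs!k \<in> S" using k(2) setxs by auto
        have "z \<notin> P (xs!k)" using S_sep[OF kS zS] k(3) by blast
        then have "P (xs!k) \<subseteq> gcomp (delS E2 {z}) (xs!i)" using piece_in[OF kS k(4)] by blast
        then show "\<exists>k. i < k \<and> k < n \<and> P (xs!k) \<subseteq> gcomp (delS E2 {z}) (xs!i)" using k by blast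
      qed
    next
      case False
      then have "{x,z} \<in> E1" using e E2_eq by blast
      then have eE: "{x,z} \<in> EE" and zv: "z \<noteq> v" and eE1: "{x,z} \<in> E1" by (auto simp: delS_def)
      have zPx: "z \<in> P x" using gcomp_edge[OF eE1] .
      have zS: "z \<notin> S"
      proof
        assume "z \<in> S" then show False using S_sep[OF xS _ e(2)[symmetric]] zPx by blast
      qed
      have zN: "z \<in> nbrs EE x" using eE e(2) by (simp add: nbrs_def)
      show ?thesis
      proof (cases "2 \<le> dd i")
        case False
        have "L2 x \<le> L x" using L2_S[OF i(1)] False i(2) by simp
        also have "\<dots> \<le> Wt ww (gcomp (delS EE {z}) x)" using BD x zN unfolding Bnd_def by blast
        also have "\<dots> \<le> Wt w2 (gcomp (delS E2 {z}) x)"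
        proof (rule G_main[OF x])
          show "v \<notin> {z}" using zv by simp
          show "{z} \<inter> S = {}" using zS by simp
        qed
        finally show ?thesis .
      next
        case True
        have c1: "2*i+1 < n" using dd_c1[OF True] .
        have in2: "i + 2 < n"
        proof (cases "0 < i")
          case True then show ?thesis using c1 by linarith
        next
          case False then have "2*i+2 < n" using \<open>2 \<le> dd i\<close> by (cases "2*i+2 < n") (auto split: if_splits)
          then show ?thesis using False by simp
        qed
        have ZS: "{z} \<inter> S = {}" using zS by simp
        have pieces: "P (xs!k) \<subseteq> gcomp (delS E2 {z}) x" if k: "i < k" "k < n" for k
        proof -
          have kS: "xs!k \<in> S" using k(2) setxs by auto
          have kx: "xs!k \<noteq> x" using xs_inj k i by auto
          have "xs!k \<in> gcomp H x" using H_conn[OF xS kS] .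
          moreover have "gcomp H x \<subseteq> gcomp (delS E2 {z}) x" using H_avoid[OF ZS] by (rule gcomp_mono)
          ultimately have kin: "xs!k \<in> gcomp (delS E2 {z}) x" by blast
          have "z \<notin> P (xs!k)" using P_disj[OF xS kS kx[symmetric]] zPx by blast
          then show ?thesis using piece_in[OF kS kin] by blast
        qed
        have "2 * L (xs!i) \<le> Wt w2 (gcomp (delS E2 {z}) x)"
          using two_k[of i "n-1" "n-2"] pieces[of "n-1"] pieces[of "n-2"] in2 fT by auto
        then have "2 * L x \<le> Wt w2 (gcomp (delS E2 {z}) x)" using i(2) by simp
        moreover have "L2 x \<le> 2 * L x" using L2_S[OF i(1)] True i(2) by simp
        ultimately show ?thesis by linarith
      qed
    qed
  qed
  show ?thesis using K T by blast
qed

end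



context dstep begin

definition s' :: "'a dash_state" where
  "s' = \<lparr>alive = alive s - {v}, gE = G2, hE = E2,
         cid = (\<lambda>y. if (\<exists>x\<in>S. reach E2 x y) then Min (cid s ` S) else cid s y),
         wt = w2\<rparr>"

lemma s'_alive: "alive s' = AA - {v}" and s'_gE: "gE s' = G2" and s'_hE: "hE s' = E2"
  and s'_wt: "wt s' = w2"
  and s'_cid: "cid s' = (\<lambda>y. if (\<exists>x\<in>S. reach E2 x y) then Min (cid s ` S) else cid s y)"
  by (simp_all add: s'_def)

lemma reachS: "(\<exists>x\<in>S. reach E2 x y) \<longleftrightarrow> y \<in> M"
proof
  assume "\<exists>x\<in>S. reach E2 x y"
  then obtain x where x: "x \<in> S" "y \<in> gcomp E2 x" by (auto simp: reach_eq)
  then show "y \<in> M" using comp_E2_S by blast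
next
  assume "y \<in> M"
  then obtain t where t: "t \<in> S" "y \<in> P t" by blast
  then have "y \<in> gcomp E2 t" using P_sub_E2 by blast
  then show "\<exists>x\<in>S. reach E2 x y" using t(1) by (auto simp: reach_eq)
qed

lemma E2M: "a \<in> M \<Longrightarrow> gcomp E2 a = M"
proof -
  assume "a \<in> M"
  then obtain t where t: "t \<in> S" "a \<in> P t" by blast
  then have "a \<in> gcomp E2 t" using P_sub_E2 by blast
  then have "gcomp E2 a = gcomp E2 t" by (rule gcomp_eqI)
  then show ?thesis using comp_E2_S[OF t(1)] by simp
qed

lemma m0_ne:
  assumes b: "b \<in> AA - {v}" "b \<notin> M" and Sne: "S \<noteq> {}"
  shows "cid s b \<noteq> Min (cid s ` S)"
proof
  assume h: "cid s b = Min (cid s ` S)"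
  have "Min (cid s ` S) \<in> cid s ` S" using finS Sne by (intro Min_in) auto
  then obtain s0 where s0: "s0 \<in> S" "Min (cid s ` S) = cid s s0" by auto
  have s0A: "s0 \<in> AA" using s0 S_A by blast
  have bA: "b \<in> AA" using b by blast
  have "cid s s0 = cid s b" using h s0 by simp
  then have bs0: "b \<in> gcomp EE s0" using ID s0A bA unfolding IDinv_def by blast
  show False
  proof (cases "s0 \<in> nbrs EE v")
    case True
    have "s0 \<in> gcomp EE v" using True nbrE_comp by blast
    then have "b \<in> gcomp EE v" using gcomp_trans[OF _ bs0] by blast
    then have "v \<in> gcomp EE b" by (rule gcomp_sym)
    then show False using notM(1)[OF b] by blast
  next
    case False
    then have "s0 \<in> UNS" using s0 Sdef by blast
    then have "b \<in> P s0" using P_UN bs0 by simp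
    then show False using inM[OF s0(1)] b by blast
  qed
qed

lemma ID_new: "IDinv s'"
  unfolding IDinv_def
proof (intro ballI)
  fix a b assume a: "a \<in> alive s'" and b: "b \<in> alive s'"
  have aA: "a \<in> AA - {v}" and bA: "b \<in> AA - {v}" using a b by (auto simp: s'_alive)
  have ca: "cid s' a = (if a \<in> M then Min (cid s ` S) else cid s a)" unfolding s'_cid using reachS by simp
  have cb: "cid s' b = (if b \<in> M then Min (cid s ` S) else cid s b)" unfolding s'_cid using reachS by simp
  have hE': "hE s' = E2" by (rule s'_hE)
  show "(cid s' a = cid s' b) = (b \<in> gcomp (hE s') a)"
  proof (cases "a \<in> M")
    case aM: True
    then have Sne: "S \<noteq> {}" by blast
    show ?thesis
    proof (cases "b \<in> M")
      case True then show ?thesis using aM ca cb E2M hE' by simp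
    next
      case False
      have "cid s b \<noteq> Min (cid s ` S)" using m0_ne[OF bA False Sne] .
      moreover have "b \<notin> gcomp E2 a" using E2M[OF aM] False by simp
      ultimately show ?thesis using aM False ca cb hE' by simp
    qed
  next
    case aM: False
    show ?thesis
    proof (cases "b \<in> M")
      case True
      then have Sne: "S \<noteq> {}" by blast
      have "cid s a \<noteq> Min (cid s ` S)" using m0_ne[OF aA aM Sne] .
      moreover have "b \<notin> gcomp E2 a"
      proof
        assume "b \<in> gcomp E2 a"
        then have "a \<in> gcomp E2 b" by (rule gcomp_sym)
        then show False using E2M[OF True] aM by simp
      qed
      ultimately show ?thesis using aM True ca cb hE' by auto
    next
      case False
      have "gcomp E2 a = gcomp EE a" using notM(2)[OF aA aM] .
      moreover have "(cid s a = cid s b) = (b \<in> gcomp EE a)"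
        using ID aA bA unfolding IDinv_def by blast
      ultimately show ?thesis using aM False ca cb hE' by simp
    qed
  qed
qed

lemma Fb_PE: "m \<le> n \<Longrightarrow> Fb (E1 \<union> PE xs m)"
proof (induction m)
  case 0
  have "PE xs 0 = {}" unfolding PE_def by simp
  then show ?case using Fb_mono[OF FbE] by (simp add: delS_def)
next
  case (Suc m)
  then have IH: "Fb (E1 \<union> PE xs m)" and mn: "m < n" by auto
  show ?case
  proof (cases "0 < m")
    case False
    then show ?thesis using IH PE_Suc[of xs m] by simp
  next
    case True
    let ?p = "(m - 1) div 2"
    have pm: "?p < m" using True by auto
    have eq: "E1 \<union> PE xs (Suc m) = insert {xs!m, xs!?p} (E1 \<union> PE xs m)"
      using PE_Suc[of xs m] True by auto
    have mS: "xs!m \<in> S" and pS: "xs!?p \<in> S" using mn pm setxs by auto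
    have ne: "xs!m \<noteq> xs!?p" using xs_inj mn pm by auto
    have cmp: "gcomp (E1 \<union> PE xs m) (xs!m) = P (xs!m)"
    proof (rule gcomp_union_avoid)
      fix e assume e: "e \<in> PE xs m"
      obtain a b where ab: "e = {xs!a, xs!b}" "a < m" "b < a" using PE_nodes[OF e] by blast
      have aS: "xs!a \<in> S" and bS: "xs!b \<in> S" using ab mn setxs by auto
      have "xs!a \<noteq> xs!m" "xs!b \<noteq> xs!m" using xs_inj ab mn by auto
      then have "xs!a \<notin> P (xs!m)" "xs!b \<notin> P (xs!m)" using S_sep[OF mS aS] S_sep[OF mS bS] by auto
      then show "e \<inter> P (xs!m) = {}" using ab by auto
    qed
    have "xs!?p \<notin> gcomp (E1 \<union> PE xs m) (xs!m)" using cmp S_sep[OF mS pS ne] by simp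
    then show ?thesis using eq Fb_insert[OF IH ne] by simp
  qed
qed

lemma Fb_new: "Fb E2" using Fb_PE[of n] E2_eq H_tree by simp

lemma wf_new: "wf_edges (AA - {v}) G2"
  unfolding wf_edges_def
proof
  fix e assume e: "e \<in> G2"
  show "\<exists>a b. e = {a, b} \<and> a \<noteq> b \<and> a \<in> AA - {v} \<and> b \<in> AA - {v}"
  proof (cases "e \<in> H")
    case True
    obtain a b where ab: "e = {a,b}" "a \<in> S" "b \<in> S" "a \<noteq> b" using H_nodes[OF True] by blast
    then show ?thesis using S_A by blast
  next
    case False
    then have eG: "e \<in> GG" "v \<notin> e" using e by auto
    obtain a b where ab: "e = {a,b}" "a \<noteq> b" "a \<in> AA" "b \<in> AA" using wfG eG(1) unfolding wf_edges_def by blast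
    then show ?thesis using eG(2) by auto
  qed
qed

lemma Inv_new: "Inv V0 E0 s'"
proof -
  have "hE s' \<subseteq> gE s'" unfolding s'_hE s'_gE using EG E2_eq by (auto simp: delS_def)
  moreover have "Bnd E0 s'"
    unfolding Bnd_def
  proof
    fix x assume "x \<in> alive s'"
    then have x: "x \<in> AA - {v}" by (simp add: s'_alive)
    have F: "Fv E0 s' x = L2 x" by (simp add: Fv_def s'_gE)
    show "Fv E0 s' x \<le> Wt (wt s') (gcomp (hE s') x) \<and>
          (\<forall>z\<in>nbrs (hE s') x. Fv E0 s' x \<le> Wt (wt s') (gcomp (delS (hE s') {z}) x))"
      using Bnd_x[OF x] F unfolding s'_wt s'_hE by simp
  qed
  ultimately show ?thesis unfolding Inv_def s'_alive s'_gE s'_hE using finA AV0 wf_new Fb_new ID_new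
    by auto
qed

end

lemma Inv_reach:
  assumes "finite V0" "simple_graph V0 E0" "inj_on iid V0" "dash_reachable V0 E0 iid s"
  shows "Inv V0 E0 s"
  using assms(4)
proof (induction rule: dash_reachable.induct)
  case init
  then show ?case using Inv_init[OF assms(1-3)] .
next
  case (step s v S xs c H E'new)
  interpret d: dstep V0 E0 iid s v S xs c H E'new
    using step assms(3) by unfold_locales auto
  show ?case using d.Inv_new unfolding d.s'_def by simp
qed

lemma Inv_fin:
  assumes "Inv V0 E0 s"
  shows "finite (hE s)" "\<forall>e\<in>hE s. finite e"
proof -
  have fin: "finite (alive s)" and wf: "wf_edges (alive s) (gE s)" and sub: "hE s \<subseteq> gE s"
    using assms unfolding Inv_def by auto
  have "gE s \<subseteq> Pow (alive s)"
  proof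
    fix e assume "e \<in> gE s"
    then obtain a b where "e = {a,b}" "a \<in> alive s" "b \<in> alive s" using wf unfolding wf_edges_def by blast
    then show "e \<in> Pow (alive s)" by simp
  qed
  then have "finite (gE s)" by (rule finite_subset) (simp add: fin)
  then show "finite (hE s)" using sub by (rule finite_subset[rotated])
  show "\<forall>e\<in>hE s. finite e"
  proof
    fix e assume "e \<in> hE s"
    then have "e \<in> gE s" using sub by blast
    then obtain a b where "e = {a,b}" using wf unfolding wf_edges_def by blast
    then show "finite e" by simp
  qed
qed

theorem lemma4:
  fixes V0 :: "'a set" and E0 :: "'a set set" and iid :: "'a \<Rightarrow> real"
    and s :: "'a dash_state" and v :: 'a
  assumes "finite V0"
    and "simple_graph V0 E0"
    and "connected_graph V0 E0"
    and "inj_on iid V0"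
    and "iid ` V0 \<subseteq> {0..1}"
    and "dash_reachable V0 E0 iid s"
    and "v \<in> alive s"
  shows "rem s v \<ge> 2 powr (real_of_int (delta E0 (gE s) v) / 2)"
proof -
  have I: "Inv V0 E0 s" using Inv_reach assms(1,2,4,6) by blast
  then have B: "Bnd E0 s" unfolding Inv_def by simp
  have "Fv E0 s v \<le> rem s v"
  proof (rule rem_bound)
    show "finite (hE s)" "\<forall>e\<in>hE s. finite e" using Inv_fin[OF I] by auto
    show "Fv E0 s v \<le> Wt (wt s) (gcomp (hE s) v)" using B assms(7) unfolding Bnd_def by blast
    show "Fv E0 s v \<le> Wt (wt s) (gcomp (delS (hE s) {z}) v)" if "z \<in> nbrs (hE s) v" for z
      using B assms(7) that unfolding Bnd_def by blast
  qed
  then show ?thesis unfolding Fv_def by simp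
qed


end
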